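(* Let $\mu$ be a doubling measure on $\mathbb Z$ and set $a_j=\mu(j)$. If there exist integers $j_1<j_2<j_3$ with $a_{j_2}<\min\{a_{j_1},a_{j_3}\}$, then $C^0_\mu>3$.
   Context: $\mathbb Z$ is the infinite path graph with edges $\{j,j+1\}$ and distance $|i-j|$. A measure is a weight function $\mu:\mathbb Z\to(0,\infty)$, $\mu(A)=\sum_{v\in A}\mu(v)$; $B(x,r)=\{y:|x-y|\le r\}$; $\mu$ is doubling if $\sup\{\mu(B(x,2k+1))/\mu(B(x,k)):x\in\mathbb Z,k\ge0\}<\infty$; $C^0_\mu=\sup_{x\in\mathbb Z}\mu(B(x,1))/\mu(x)$. *)

theory Defs
  imports "HOL-Analysis.Analysis" "HOL-Library.Extended_Real"
begin

definition zball :: "int \<Rightarrow> nat \<Rightarrow> int set" where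
  "zball x r = {y. \<bar>x - y\<bar> \<le> int r}"

definition zmeasure :: "(int \<Rightarrow> real) \<Rightarrow> int set \<Rightarrow> real" where
  "zmeasure \<mu> A = (\<Sum>v\<in>A. \<mu> v)"

definition doubling :: "(int \<Rightarrow> real) \<Rightarrow> bool" where
  "doubling \<mu> \<longleftrightarrow> (\<forall>v. \<mu> v > 0) \<and>
     bdd_above {zmeasure \<mu> (zball x (2*k+1)) / zmeasure \<mu> (zball x k) | x k. True}"

definition C0 :: "(int \<Rightarrow> real) \<Rightarrow> ereal" where
  "C0 \<mu> = (SUP x. ereal (zmeasure \<mu> (zball x 1) / \<mu> x))"

end

theory Submission
  imports Defs
begin

theorem lemma4p4:
  fixes \<mu> :: "int \<Rightarrow> real" and j1 j2 j3 :: int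
  assumes "doubling \<mu>"
    and "j1 < j2" and "j2 < j3"
    and "\<mu> j2 < min (\<mu> j1) (\<mu> j3)"
  shows "C0 \<mu> > 3"
proof -
  have pos: "\<And>v. \<mu> v > 0" using assms(1) unfolding doubling_def by blast
  define S where "S = {j1..j3}"
  have fS: "finite S" and j2S: "j2 \<in> S" using assms(2,3) by (auto simp: S_def)
  define v where "v = Min (\<mu> ` S)"
  have vle: "\<And>j. j \<in> S \<Longrightarrow> v \<le> \<mu> j" using fS by (auto simp: v_def)
  have vin: "v \<in> \<mu> ` S" using fS j2S unfolding v_def by (intro Min_in) auto
  define T where "T = {j \<in> S. \<mu> j = v}"
  have fT: "finite T" using fS by (simp add: T_def)
  have neT: "T \<noteq> {}" using vin by (auto simp: T_def)
  define m where "m = Min T"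
  have mT: "m \<in> T" using fT neT by (simp add: m_def)
  have mmin: "\<And>j. j \<in> T \<Longrightarrow> m \<le> j" using fT by (simp add: m_def)
  have mS: "m \<in> S" and mv: "\<mu> m = v" using mT by (auto simp: T_def)
  have "v \<le> \<mu> j2" using vle j2S by blast
  hence "m \<noteq> j1" "m \<noteq> j3" using mv assms(4) by auto
  hence m1: "j1 < m" and m3: "m < j3" using mS by (auto simp: S_def)
  have "m - 1 \<in> S" "m + 1 \<in> S" using m1 m3 by (auto simp: S_def)
  hence a: "\<mu> (m-1) \<ge> v" and b: "\<mu> (m+1) \<ge> v" using vle by auto
  have "m - 1 \<notin> T" using mmin by force
  hence a': "\<mu> (m-1) > v" using a \<open>m - 1 \<in> S\<close> by (auto simp: T_def)
  have ball: "zball m 1 = {m-1, m, m+1}" by (auto simp: zball_def)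
  have "zmeasure \<mu> (zball m 1) = \<mu> (m-1) + \<mu> m + \<mu> (m+1)"
    unfolding ball zmeasure_def by simp
  hence "zmeasure \<mu> (zball m 1) > 3 * \<mu> m" using a' b mv by simp
  hence r: "zmeasure \<mu> (zball m 1) / \<mu> m > 3" using pos[of m]
    by (simp add: pos_less_divide_eq)
  have "ereal (zmeasure \<mu> (zball m 1) / \<mu> m) \<le> C0 \<mu>"
    unfolding C0_def by (rule SUP_upper) simp
  moreover have "(3::ereal) < ereal (zmeasure \<mu> (zball m 1) / \<mu> m)" using r by simp
  ultimately show ?thesis by (meson less_le_trans)
qed

end
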